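(* Let $\lambda_0,\dots,\lambda_n\in\mathbb{C}$ with $\lambda_0\neq\lambda_1$, $a\neq b$ real, and suppose $E_{(\lambda_0,\dots,\lambda_n)}$, $E_{(\lambda_0,\lambda_2,\dots,\lambda_n)}$, $E_{(\lambda_1,\dots,\lambda_n)}$ and $E_{(\lambda_2,\dots,\lambda_n)}$ are extended Chebyshev systems for $\{a,b\}$. Then for each $k=0,\dots,n-1$ there is a constant $C_k\neq0$ such that $$p_{(\lambda_0,\lambda_2,\dots,\lambda_n),k}-p_{(\lambda_1,\lambda_2,\dots,\lambda_n),k}=C_k\,p_{(\lambda_0,\lambda_1,\lambda_2,\dots,\lambda_n),k+1},$$ and $$\lim_{x\to b}\frac{p_{(\lambda_0,\lambda_2,\dots,\lambda_n),k}(x)}{p_{(\lambda_1,\dots,\lambda_n),k}(x)}\neq1.$$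
   Context: $E_{(\mu_0,\dots,\mu_m)}$ denotes the space of all $f\in C^\infty(\mathbb{R},\mathbb{C})$ with $(\frac{d}{dx}-\mu_0)\cdots(\frac{d}{dx}-\mu_m)f=0$ (dimension $m+1$). A zero of order (exactly) $k$ at $a$ means $f(a)=\dots=f^{(k-1)}(a)=0$, $f^{(k)}(a)\neq0$. $E_{(\mu_0,\dots,\mu_m)}$ is an extended Chebyshev system for $A\subset\mathbb{R}$ if every nonzero element has at most $m$ zeros in $A$ counted with multiplicity. In that case, for $A=\{a,b\}$, $a\ne b$, the Bernstein basis $p_{(\mu_0,\dots,\mu_m),k}$, $k=0,\dots,m$, is the unique family in $E_{(\mu_0,\dots,\mu_m)}$ with $p_{(\mu_0,\dots,\mu_m),k}$ having a zero of order exactly $k$ at $a$ and exactly $m-k$ at $b$, and $p^{(k)}_{(\mu_0,\dots,\mu_m),k}(a)=1$. *)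

theory Defs
  imports "HOL-Analysis.Analysis"
begin

fun nderiv :: "nat \<Rightarrow> (real \<Rightarrow> complex) \<Rightarrow> real \<Rightarrow> complex" where
  "nderiv 0 f = f"
| "nderiv (Suc k) f = (\<lambda>x. vector_derivative (nderiv k f) (at x))"

definition smooth :: "(real \<Rightarrow> complex) \<Rightarrow> bool" where
  "smooth f \<longleftrightarrow> (\<forall>k x. nderiv k f differentiable (at x))"

fun diffop :: "complex list \<Rightarrow> (real \<Rightarrow> complex) \<Rightarrow> real \<Rightarrow> complex" where
  "diffop [] f = f"
| "diffop (\<mu> # \<mu>s) f =
     (\<lambda>x. vector_derivative (diffop \<mu>s f) (at x) - \<mu> * diffop \<mu>s f x)"

definition Espace :: "complex list \<Rightarrow> (real \<Rightarrow> complex) set" where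
  "Espace \<mu>s = {f. smooth f \<and> diffop \<mu>s f = (\<lambda>_. 0)}"

definition zero_of_order :: "(real \<Rightarrow> complex) \<Rightarrow> real \<Rightarrow> nat \<Rightarrow> bool" where
  "zero_of_order f a k \<longleftrightarrow> (\<forall>j<k. nderiv j f a = 0) \<and> nderiv k f a \<noteq> 0"

text \<open>f has at most m zeros in A counted with multiplicity: for every finite
  set S of points of A and every assignment of multiplicities k with f vanishing
  to order at least k(s) at s, the total multiplicity is at most m.\<close>
definition at_most_zeros :: "(real \<Rightarrow> complex) \<Rightarrow> real set \<Rightarrow> nat \<Rightarrow> bool" where
  "at_most_zeros f A m \<longleftrightarrow>
     (\<forall>S k. finite S \<longrightarrow> S \<subseteq> A \<longrightarrow> (\<forall>s\<in>S. \<forall>j<k s. nderiv j f s = 0)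
        \<longrightarrow> (\<Sum>s\<in>S. k s) \<le> m)"

text \<open>Extended Chebyshev system; m + 1 = length of the list (dimension).\<close>
definition ECT :: "complex list \<Rightarrow> real set \<Rightarrow> bool" where
  "ECT \<mu>s A \<longleftrightarrow>
     (\<forall>f\<in>Espace \<mu>s. f \<noteq> (\<lambda>_. 0) \<longrightarrow> at_most_zeros f A (length \<mu>s - 1))"

definition bernstein :: "complex list \<Rightarrow> real \<Rightarrow> real \<Rightarrow> nat \<Rightarrow> real \<Rightarrow> complex" where
  "bernstein \<mu>s a b k = (THE p. p \<in> Espace \<mu>s \<and> zero_of_order p a k
      \<and> zero_of_order p b (length \<mu>s - 1 - k) \<and> nderiv k p a = 1)"

end

theory Submission
  imports Defs "Jordan_Normal_Form.Determinant"
begin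


lemma nderiv_Suc': "nderiv (Suc k) f = nderiv k (\<lambda>x. vector_derivative f (at x))"
  by (induction k) auto

lemma smooth_D: "smooth f \<Longrightarrow> smooth (\<lambda>x. vector_derivative f (at x))"
  unfolding smooth_def by (metis nderiv_Suc')

lemma smooth_hvd: "smooth f \<Longrightarrow> (nderiv k f has_vector_derivative nderiv (Suc k) f x) (at x)"
  unfolding smooth_def by (simp add: vector_derivative_works[symmetric])

lemma smooth_hvd2: "smooth f \<Longrightarrow> (nderiv k f has_vector_derivative vector_derivative (nderiv k f) (at x)) (at x)"
  using smooth_hvd by simp

lemma smooth_cont: "smooth f \<Longrightarrow> continuous_on UNIV (nderiv k f)"
  by (meson continuous_on_vector_derivative smooth_hvd has_vector_derivative_at_within)

lemma nderiv_diff: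
  assumes "smooth f" "smooth g"
  shows "nderiv k (\<lambda>x. f x - g x) = (\<lambda>x. nderiv k f x - nderiv k g x)"
proof (induction k)
  case 0 then show ?case by simp
next
  case (Suc k)
  show ?case
    by (rule ext, simp only: nderiv.simps Suc, rule vector_derivative_at)
       (intro has_vector_derivative_diff smooth_hvd2 assms)
qed

lemma nderiv_cmult:
  assumes "smooth f"
  shows "nderiv k (\<lambda>x. c * f x) = (\<lambda>x. c * nderiv k f x)"
proof (induction k)
  case 0 then show ?case by simp
next
  case (Suc k)
  show ?case
    by (rule ext, simp only: nderiv.simps Suc, rule vector_derivative_at)
       (intro has_vector_derivative_mult_right smooth_hvd2 assms)
qed

lemma nderiv_sum:
  assumes "\<And>i. i \<in> I \<Longrightarrow> smooth (f i)"
  shows "nderiv k (\<lambda>x. \<Sum>i\<in>I. c i * f i x) = (\<lambda>x. \<Sum>i\<in>I. c i * nderiv k (f i) x)"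
proof (induction k)
  case 0 then show ?case by simp
next
  case (Suc k)
  show ?case
    by (rule ext, simp only: nderiv.simps Suc, rule vector_derivative_at)
       (intro has_vector_derivative_sum has_vector_derivative_mult_right smooth_hvd2 assms)
qed

lemma smooth_diff: assumes "smooth f" "smooth g" shows "smooth (\<lambda>x. f x - g x)"
  unfolding smooth_def nderiv_diff[OF assms]
  by (intro allI differentiableI_vector[OF has_vector_derivative_diff[OF smooth_hvd[OF assms(1)] smooth_hvd[OF assms(2)]]])

lemma smooth_cmult: assumes "smooth f" shows "smooth (\<lambda>x. c * f x)"
  unfolding smooth_def nderiv_cmult[OF assms]
  by (intro allI differentiableI_vector[OF has_vector_derivative_mult_right[OF smooth_hvd[OF assms(1)]]])

lemma smooth_sum: assumes "\<And>i. i \<in> I \<Longrightarrow> smooth (f i)" shows "smooth (\<lambda>x. \<Sum>i\<in>I. c i * f i x)"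
proof -
  have e: "nderiv k (\<lambda>x. \<Sum>i\<in>I. c i * f i x) = (\<lambda>x. \<Sum>i\<in>I. c i * nderiv k (f i) x)" for k
    by (rule nderiv_sum[OF assms])
  have "((\<lambda>x. \<Sum>i\<in>I. c i * nderiv k (f i) x) has_vector_derivative
          (\<Sum>i\<in>I. c i * nderiv (Suc k) (f i) x)) (at x)" for k x
    by (intro has_vector_derivative_sum has_vector_derivative_mult_right smooth_hvd assms)
  then show ?thesis unfolding smooth_def e using differentiableI_vector by blast
qed

definition lop :: "complex \<Rightarrow> (real \<Rightarrow> complex) \<Rightarrow> real \<Rightarrow> complex" where
  "lop \<mu> g = (\<lambda>x. vector_derivative g (at x) - \<mu> * g x)"

lemma diffop_Cons: "diffop (\<mu> # \<mu>s) f = lop \<mu> (diffop \<mu>s f)"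
  by (simp add: lop_def)

lemma smooth_lop: "smooth g \<Longrightarrow> smooth (lop \<mu> g)"
  unfolding lop_def by (intro smooth_diff smooth_D smooth_cmult)

lemma smooth_diffop: "smooth f \<Longrightarrow> smooth (diffop \<mu>s f)"
  by (induction \<mu>s) (simp, simp add: diffop_Cons smooth_lop del: diffop.simps)

lemma lop_diff: "smooth f \<Longrightarrow> smooth g \<Longrightarrow> lop \<mu> (\<lambda>x. f x - g x) = (\<lambda>x. lop \<mu> f x - lop \<mu> g x)"
  using nderiv_diff[of f g 1] by (auto simp: lop_def fun_eq_iff algebra_simps)

lemma lop_cmult: "smooth f \<Longrightarrow> lop \<mu> (\<lambda>x. c * f x) = (\<lambda>x. c * lop \<mu> f x)"
  using nderiv_cmult[of f 1 c] by (auto simp: lop_def fun_eq_iff algebra_simps)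

lemma lop_sum: "(\<And>i. i \<in> I \<Longrightarrow> smooth (f i)) \<Longrightarrow>
   lop \<mu> (\<lambda>x. \<Sum>i\<in>I. c i * f i x) = (\<lambda>x. \<Sum>i\<in>I. c i * lop \<mu> (f i) x)"
  using nderiv_sum[of I f 1 c] by (auto simp: lop_def fun_eq_iff algebra_simps sum_subtractf sum_distrib_left)

lemma diffop_diff: "smooth f \<Longrightarrow> smooth g \<Longrightarrow> diffop \<mu>s (\<lambda>x. f x - g x) = (\<lambda>x. diffop \<mu>s f x - diffop \<mu>s g x)"
  by (induction \<mu>s) (simp, simp add: diffop_Cons lop_diff smooth_diffop del: diffop.simps)

lemma diffop_cmult: "smooth f \<Longrightarrow> diffop \<mu>s (\<lambda>x. c * f x) = (\<lambda>x. c * diffop \<mu>s f x)"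
  by (induction \<mu>s) (simp, simp add: diffop_Cons lop_cmult smooth_diffop del: diffop.simps)

lemma diffop_sum: "(\<And>i. i \<in> I \<Longrightarrow> smooth (f i)) \<Longrightarrow>
   diffop \<mu>s (\<lambda>x. \<Sum>i\<in>I. c i * f i x) = (\<lambda>x. \<Sum>i\<in>I. c i * diffop \<mu>s (f i) x)"
proof (induction \<mu>s)
  case Nil then show ?case by simp
next
  case (Cons \<mu> \<mu>s)
  then show ?case by (simp add: diffop_Cons lop_sum smooth_diffop del: diffop.simps)
qed

lemma lop_zero: "lop \<mu> (\<lambda>x. 0) = (\<lambda>x. 0)"
  by (simp add: lop_def)

lemma Espace_Cons: "f \<in> Espace \<mu>s \<Longrightarrow> f \<in> Espace (\<mu> # \<mu>s)"
  by (simp add: Espace_def diffop_Cons lop_zero)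

lemma lop_comm: assumes "smooth g" shows "lop \<mu> (lop \<nu> g) = lop \<nu> (lop \<mu> g)"
proof -
  have d: "smooth (\<lambda>x. vector_derivative g (at x))" using smooth_D[OF assms] .
  have "lop \<mu> (lop \<nu> g) = (\<lambda>x. nderiv 2 g x - \<nu> * nderiv 1 g x - \<mu> * nderiv 1 g x + \<mu> * \<nu> * g x)"
    unfolding lop_def using nderiv_diff[OF d smooth_cmult[OF assms], of 1 \<nu>]
      nderiv_cmult[OF assms, of 1 \<nu>]
    by (simp add: fun_eq_iff algebra_simps numeral_2_eq_2)
  moreover have "lop \<nu> (lop \<mu> g) = (\<lambda>x. nderiv 2 g x - \<nu> * nderiv 1 g x - \<mu> * nderiv 1 g x + \<mu> * \<nu> * g x)"
    unfolding lop_def using nderiv_diff[OF d smooth_cmult[OF assms], of 1 \<mu>]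
      nderiv_cmult[OF assms, of 1 \<mu>]
    by (simp add: fun_eq_iff algebra_simps numeral_2_eq_2)
  ultimately show ?thesis by simp
qed

lemma Espace_Cons2: "f \<in> Espace (\<mu> # \<mu>s) \<Longrightarrow> f \<in> Espace (\<mu> # \<nu> # \<mu>s)"
  unfolding Espace_def diffop_Cons
  using lop_comm[OF smooth_diffop, of f \<mu> \<nu> \<mu>s] by (auto simp: lop_zero)

lemma Espace_diff: "f \<in> Espace \<mu>s \<Longrightarrow> g \<in> Espace \<mu>s \<Longrightarrow> (\<lambda>x. f x - g x) \<in> Espace \<mu>s"
  by (auto simp: Espace_def diffop_diff smooth_diff)

lemma Espace_cmult: "f \<in> Espace \<mu>s \<Longrightarrow> (\<lambda>x. c * f x) \<in> Espace \<mu>s"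
  by (auto simp: Espace_def diffop_cmult smooth_cmult)

lemma Espace_sum: "(\<And>i. i \<in> I \<Longrightarrow> f i \<in> Espace \<mu>s) \<Longrightarrow> (\<lambda>x. \<Sum>i\<in>I. c i * f i x) \<in> Espace \<mu>s"
  by (auto simp: Espace_def diffop_sum smooth_sum)



lemma antideriv:
  fixes h :: "real \<Rightarrow> complex"
  assumes h: "continuous_on UNIV h"
  shows "\<exists>V. \<forall>x. (V has_vector_derivative h x) (at x)"
proof -
  define V where "V x = integral {0..x} h - integral {x..0} h" for x
  have hi: "h integrable_on {c..d}" for c d
    by (rule integrable_continuous_interval) (rule continuous_on_subset[OF h], simp)
  have V_eq: "V y = integral {c..y} h - integral {c..0} h" if "c \<le> y" "c \<le> 0" for c y
  proof (cases "0 \<le> y")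
    case True
    have "integral {y..0} h = 0" using True by (cases "y = 0") auto
    moreover have "integral {c..0} h + integral {0..y} h = integral {c..y} h"
      using Henstock_Kurzweil_Integration.integral_combine[OF that(2) True hi] .
    ultimately show ?thesis unfolding V_def by (simp add: algebra_simps)
  next
    case False
    have "integral {0..y} h = 0" using False by simp
    moreover have "integral {c..y} h + integral {y..0} h = integral {c..0} h"
      using Henstock_Kurzweil_Integration.integral_combine[OF that(1) _ hi] False by simp
    ultimately show ?thesis unfolding V_def by (simp add: algebra_simps)
  qed
  show ?thesis
  proof (intro exI allI)
    fix x :: real
    define c where "c = min x 0 - 1"
    define d where "d = max x 0 + 1"
    have cx: "c < x" "x < d" by (auto simp: c_def d_def)
    have "((\<lambda>u. integral {c..u} h) has_vector_derivative h x) (at x within {c..d})"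
      by (rule integral_has_vector_derivative) (auto intro: continuous_on_subset[OF h] simp: c_def d_def)
    then have "((\<lambda>u. integral {c..u} h) has_vector_derivative h x) (at x)"
      by (simp add: at_within_Icc_at[OF cx])
    then have "((\<lambda>u. integral {c..u} h - integral {c..0} h) has_vector_derivative h x) (at x)"
      using has_vector_derivative_diff[OF _ has_vector_derivative_const] by fastforce
    then show "(V has_vector_derivative h x) (at x)"
    proof (rule has_vector_derivative_transform_within_open[of _ _ _ "{c<..<d}"])
      show "open {c<..<d}" by simp
      show "x \<in> {c<..<d}" using cx by simp
      fix y assume "y \<in> {c<..<d}"
      then have "c \<le> y" by simp
      moreover have "c \<le> 0" by (simp add: c_def)
      ultimately show "integral {c..y} h - integral {c..0} h = V y" using V_eq[of c y] by simp
    qed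
  qed
qed

lemma exp_hvd: "((\<lambda>x::real. exp (c * complex_of_real x)) has_vector_derivative c * exp (c * of_real x)) (at x)"
proof -
  have "((\<lambda>z. exp (c*z)) has_field_derivative c * exp (c * of_real x)) (at (of_real x))"
    by (auto intro!: derivative_eq_intros)
  from has_vector_derivative_real_field[OF this] show ?thesis by simp
qed

lemma nderiv_zero: "nderiv k (\<lambda>x. 0) = (\<lambda>x. 0)"
  by (induction k) auto

lemma smooth_zero: "smooth (\<lambda>x. 0)"
  unfolding smooth_def nderiv_zero by simp

lemma diffop_zero: "diffop \<mu>s (\<lambda>x. 0) = (\<lambda>x. 0)"
  by (induction \<mu>s) (simp, simp add: diffop_Cons lop_zero del: diffop.simps)

lemma smooth_ode:
  assumes g: "smooth g" and u: "\<And>x. (u has_vector_derivative (\<mu> * u x + g x)) (at x)"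
  shows "smooth u"
proof -
  have "\<forall>x. (nderiv k u has_vector_derivative (\<mu> * nderiv k u x + nderiv k g x)) (at x)" for k
  proof (induction k)
    case 0 then show ?case using u by simp
  next
    case (Suc k)
    have e: "nderiv (Suc k) u = (\<lambda>x. \<mu> * nderiv k u x + nderiv k g x)"
      using Suc by (auto intro!: vector_derivative_at simp: fun_eq_iff)
    show ?case
    proof
      fix x
      have "((\<lambda>x. \<mu> * nderiv k u x + nderiv k g x) has_vector_derivative
              \<mu> * (\<mu> * nderiv k u x + nderiv k g x) + nderiv (Suc k) g x) (at x)"
        by (intro has_vector_derivative_add has_vector_derivative_mult_right Suc[rule_format] smooth_hvd g)
      then show "(nderiv (Suc k) u has_vector_derivative \<mu> * nderiv (Suc k) u x + nderiv (Suc k) g x) (at x)"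
        by (simp only: e)
    qed
  qed
  then show ?thesis unfolding smooth_def using differentiableI_vector by blast
qed

lemma smooth_exp: "smooth (\<lambda>x. exp (\<mu> * complex_of_real x))"
  by (rule smooth_ode[OF smooth_zero, of _ \<mu>]) (simp add: exp_hvd)

lemma lop_exp: "lop \<mu> (\<lambda>x. exp (\<mu> * complex_of_real x)) = (\<lambda>x. 0)"
  by (simp add: lop_def fun_eq_iff vector_derivative_at[OF exp_hvd])

lemma ode_solve: assumes g: "smooth g" shows "\<exists>u. smooth u \<and> lop \<mu> u = g"
proof -
  have cont: "continuous_on UNIV (\<lambda>x. exp (- \<mu> * of_real x) * g x)"
  proof -
    have c1: "continuous_on UNIV g" using smooth_cont[OF g, of 0] by simp
    have c2: "continuous_on UNIV (\<lambda>x. exp (- \<mu> * complex_of_real x))"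
      using smooth_cont[OF smooth_exp, of 0 "-\<mu>"] by simp
    show ?thesis by (rule continuous_on_mult[OF c2 c1])
  qed
  obtain V where V: "\<And>x. (V has_vector_derivative exp (- \<mu> * of_real x) * g x) (at x)"
    using antideriv[OF cont] by blast
  define u where "u x = exp (\<mu> * of_real x) * V x" for x
  have ud: "(u has_vector_derivative (\<mu> * u x + g x)) (at x)" for x
  proof -
    have "(u has_vector_derivative exp (\<mu> * of_real x) * (exp (- \<mu> * of_real x) * g x)
            + \<mu> * exp (\<mu> * of_real x) * V x) (at x)"
      unfolding u_def[abs_def] by (intro has_vector_derivative_mult exp_hvd V)
    moreover have "exp (\<mu> * of_real x) * exp (- \<mu> * of_real x) = 1"
      by (simp add: mult_exp_exp)
    then have "exp (\<mu> * of_real x) * (exp (- \<mu> * of_real x) * g x)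
            + \<mu> * exp (\<mu> * of_real x) * V x = \<mu> * u x + g x"
      by (simp add: u_def algebra_simps)
    ultimately show ?thesis by simp
  qed
  have "smooth u" by (rule smooth_ode[OF g ud])
  moreover have "lop \<mu> u = g" by (simp add: lop_def fun_eq_iff vector_derivative_at[OF ud])
  ultimately show ?thesis by blast
qed

lemma solve_diffop: "smooth g \<Longrightarrow> \<exists>h. smooth h \<and> diffop \<mu>s h = g"
proof (induction \<mu>s arbitrary: g)
  case Nil then show ?case by auto
next
  case (Cons \<mu> \<mu>s)
  obtain u where u: "smooth u" "lop \<mu> u = g" using ode_solve[OF Cons.prems] by blast
  obtain h where "smooth h" "diffop \<mu>s h = u" using Cons.IH[OF u(1)] by blast
  then show ?case using u by (auto simp: diffop_Cons simp del: diffop.simps)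
qed

definition indep :: "(real \<Rightarrow> complex) list \<Rightarrow> bool" where
  "indep fs \<longleftrightarrow> (\<forall>c. (\<forall>x. (\<Sum>i<length fs. c i * (fs!i) x) = 0) \<longrightarrow> (\<forall>i<length fs. c i = 0))"

lemma basis_exists: "\<exists>fs. length fs = length \<mu>s \<and> (\<forall>i<length fs. fs!i \<in> Espace \<mu>s) \<and> indep fs"
proof (induction \<mu>s)
  case Nil then show ?case by (auto simp: indep_def)
next
  case (Cons \<mu> \<mu>s)
  then obtain fs where fs: "length fs = length \<mu>s" "\<forall>i<length fs. fs!i \<in> Espace \<mu>s" "indep fs" by blast
  obtain h where h: "smooth h" "diffop \<mu>s h = (\<lambda>x. exp (\<mu> * of_real x))"
    using solve_diffop[OF smooth_exp] by blast
  define fs' where "fs' = fs @ [h]"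
  let ?n = "length fs"
  have len: "length fs' = Suc ?n" by (simp add: fs'_def)
  have mem: "\<forall>i<length fs'. fs'!i \<in> Espace (\<mu>#\<mu>s)"
  proof (intro allI impI)
    fix i assume i: "i < length fs'"
    show "fs'!i \<in> Espace (\<mu>#\<mu>s)"
    proof (cases "i < ?n")
      case True then show ?thesis using fs(2) Espace_Cons by (simp add: fs'_def nth_append)
    next
      case False
      then have "fs'!i = h" using i len by (simp add: fs'_def nth_append)
      then show ?thesis using h by (simp add: Espace_def diffop_Cons lop_exp del: diffop.simps)
    qed
  qed
  have ind: "\<forall>i<length fs'. c i = 0" if z: "\<forall>x. (\<Sum>i<length fs'. c i * (fs'!i) x) = 0" for c
  proof -
    have sm: "\<And>i. i \<in> {..<length fs'} \<Longrightarrow> smooth (fs'!i)" using mem by (auto simp: Espace_def)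
    have "(\<lambda>x. \<Sum>i<length fs'. c i * (fs'!i) x) = (\<lambda>x. 0)" using z by auto
    then have "diffop \<mu>s (\<lambda>x. \<Sum>i<length fs'. c i * (fs'!i) x) = (\<lambda>x. 0)" by (simp add: diffop_zero)
    moreover have "diffop \<mu>s (\<lambda>x. \<Sum>i<length fs'. c i * (fs'!i) x) = (\<lambda>x. \<Sum>i<length fs'. c i * diffop \<mu>s (fs'!i) x)"
      by (rule diffop_sum) (rule sm)
    ultimately have z2: "(\<lambda>x. \<Sum>i<length fs'. c i * diffop \<mu>s (fs'!i) x) = (\<lambda>x. 0)"
      by simp
    have "(\<Sum>i<length fs'. c i * diffop \<mu>s (fs'!i) x) = c ?n * exp (\<mu> * of_real x)" for x
    proof -
      have "(\<Sum>i<?n. c i * diffop \<mu>s (fs'!i) x) = 0"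
        using fs(2) by (intro sum.neutral) (auto simp: fs'_def nth_append Espace_def)
      then show ?thesis by (simp add: len fs'_def h)
    qed
    from fun_cong[OF z2, of 0] this[of 0] have cn: "c ?n = 0" by simp
    have "\<forall>x. (\<Sum>i<?n. c i * (fs!i) x) = 0"
    proof
      fix x
      from z[rule_format, of x] cn show "(\<Sum>i<?n. c i * (fs!i) x) = 0"
        by (simp add: len fs'_def nth_append)
    qed
    with fs(3) have "\<forall>i<?n. c i = 0" unfolding indep_def by blast
    with cn show "\<forall>i<length fs'. c i = 0" using len less_Suc_eq by auto
  qed
  then have "indep fs'" unfolding indep_def by blast
  with mem len fs(1) show ?case by auto
qed



lemma ECT_zero:
  assumes ect: "ECT \<mu>s {a,b}" and ab: "a \<noteq> b" and f: "f \<in> Espace \<mu>s"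
    and za: "\<forall>j<ka. nderiv j f a = 0" and zb: "\<forall>j<kb. nderiv j f b = 0"
    and gt: "ka + kb > length \<mu>s - 1"
  shows "f = (\<lambda>x. 0)"
proof (rule ccontr)
  assume "f \<noteq> (\<lambda>x. 0)"
  with ect f have "at_most_zeros f {a,b} (length \<mu>s - 1)" by (auto simp: ECT_def)
  then have H: "\<forall>S K. finite S \<longrightarrow> S \<subseteq> {a,b} \<longrightarrow> (\<forall>s\<in>S. \<forall>j<K s. nderiv j f s = 0)
        \<longrightarrow> (\<Sum>s\<in>S. K s) \<le> length \<mu>s - 1" unfolding at_most_zeros_def by blast
  define K where "K s = (if s = a then ka else kb)" for s
  have "\<forall>s\<in>{a,b}. \<forall>j<K s. nderiv j f s = 0" using za zb ab by (auto simp: K_def)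
  moreover have "finite {a,b}" "{a,b} \<subseteq> {a,b}" by auto
  ultimately have "(\<Sum>s\<in>{a,b}. K s) \<le> length \<mu>s - 1"
    using H[THEN spec[of _ "{a,b}"], THEN spec[of _ K]] by blast
  then show False using ab gt by (simp add: K_def)
qed

lemma solve_mat:
  assumes A: "A \<in> carrier_mat n n" and d: "Determinant.det A \<noteq> (0::complex)" and y: "y \<in> carrier_vec n"
  shows "\<exists>x\<in>carrier_vec n. A *\<^sub>v x = y"
proof -
  from det_non_zero_imp_unit[OF A d, of "()"] obtain B where B: "B \<in> carrier_mat n n" "A * B = 1\<^sub>m n"
    unfolding Units_def ring_mat_def by auto
  show ?thesis
    by (rule bexI[of _ "B *\<^sub>v y"]) (use A B y in \<open>auto simp: assoc_mult_mat_vec[symmetric]\<close>)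
qed

lemma hermite_exists:
  assumes ect: "ECT \<mu>s {a,b}" and ab: "a \<noteq> b" and k: "k < length \<mu>s"
  shows "\<exists>p\<in>Espace \<mu>s. (\<forall>j<k. nderiv j p a = 0) \<and> nderiv k p a = 1
           \<and> (\<forall>j<length \<mu>s - 1 - k. nderiv j p b = 0)"
proof -
  define N where "N = length \<mu>s"
  obtain fs where fs: "length fs = N" "\<forall>i<N. fs!i \<in> Espace \<mu>s" "indep fs"
    using basis_exists[of \<mu>s] N_def by auto
  define L where "L i f = (if i \<le> k then nderiv i f a else nderiv (i - Suc k) f b)" for i f
  have sm: "smooth (fs!j)" if "j \<in> {..<N}" for j using fs(2) that by (auto simp: Espace_def)
  have ns: "nderiv i (\<lambda>x. \<Sum>j<N. c j * (fs!j) x) = (\<lambda>x. \<Sum>j<N. c j * nderiv i (fs!j) x)" for i c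
    by (rule nderiv_sum) (rule sm)
  have Lsum: "L i (\<lambda>x. \<Sum>j<N. c j * (fs!j) x) = (\<Sum>j<N. c j * L i (fs!j))" for i c
    by (simp add: L_def ns)
  have ker: "(\<lambda>x. \<Sum>j<N. c j * (fs!j) x) = (\<lambda>x. 0)"
    if H: "\<forall>i<N. L i (\<lambda>x. \<Sum>j<N. c j * (fs!j) x) = 0" for c
  proof (rule ECT_zero[OF ect ab, of _ "Suc k" "N - 1 - k"])
    show "(\<lambda>x. \<Sum>j<N. c j * (fs!j) x) \<in> Espace \<mu>s" by (rule Espace_sum) (use fs(2) in auto)
    show "\<forall>j<Suc k. nderiv j (\<lambda>x. \<Sum>j<N. c j * (fs!j) x) a = 0"
    proof (intro allI impI)
      fix j assume j: "j < Suc k"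
      then have "j < N" using k N_def by simp
      with H j show "nderiv j (\<lambda>x. \<Sum>j<N. c j * (fs!j) x) a = 0" by (auto simp: L_def)
    qed
    show "\<forall>j<N - 1 - k. nderiv j (\<lambda>x. \<Sum>j<N. c j * (fs!j) x) b = 0"
    proof (intro allI impI)
      fix j assume j: "j < N - 1 - k"
      then have "j + Suc k < N" by simp
      with H have "L (j + Suc k) (\<lambda>x. \<Sum>j<N. c j * (fs!j) x) = 0" by blast
      then show "nderiv j (\<lambda>x. \<Sum>j<N. c j * (fs!j) x) b = 0" by (simp add: L_def)
    qed
    show "Suc k + (N - 1 - k) > length \<mu>s - 1" using k N_def by simp
  qed
  define A where "A = mat N N (\<lambda>(i,j). L i (fs!j))"
  have A: "A \<in> carrier_mat N N" by (simp add: A_def)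
  have Av: "(A *\<^sub>v v) $ i = (\<Sum>j<N. v$j * L i (fs!j))" if "i < N" "v \<in> carrier_vec N" for v i
    using that by (simp add: A_def mult_mat_vec_def scalar_prod_def atLeast0LessThan mult.commute)
  have "Determinant.det A \<noteq> 0"
  proof
    assume "Determinant.det A = 0"
    then obtain v where v: "v \<in> carrier_vec N" "v \<noteq> 0\<^sub>v N" "A *\<^sub>v v = 0\<^sub>v N"
      using det_0_iff_vec_prod_zero_field[OF A] by auto
    have "\<forall>i<N. L i (\<lambda>x. \<Sum>j<N. v$j * (fs!j) x) = 0"
    proof (intro allI impI)
      fix i assume i: "i < N"
      have "(A *\<^sub>v v) $ i = 0" using v(3) i by simp
      then show "L i (\<lambda>x. \<Sum>j<N. v$j * (fs!j) x) = 0" using Av[OF i v(1)] by (simp add: Lsum)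
    qed
    then have "(\<lambda>x. \<Sum>j<N. v$j * (fs!j) x) = (\<lambda>x. 0)" by (rule ker)
    then have "\<forall>x. (\<Sum>j<length fs. v$j * (fs!j) x) = 0" unfolding fs(1) by (simp add: fun_eq_iff)
    moreover have "(\<forall>x. (\<Sum>j<length fs. v$j * (fs!j) x) = 0) \<longrightarrow> (\<forall>j<length fs. v$j = 0)"
      using fs(3)[unfolded indep_def, THEN spec[of _ "\<lambda>j. v$j"]] .
    ultimately have "\<forall>j<N. v$j = 0" using fs(1) by simp
    then have "v = 0\<^sub>v N"
    proof (intro eq_vecI)
      fix i assume "\<forall>j<N. v$j = 0" "i < dim_vec (0\<^sub>v N)"
      then show "v $ i = 0\<^sub>v N $ i" by simp
    next
      show "dim_vec v = dim_vec (0\<^sub>v N)" using v(1) by simp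
    qed
    with v(2) show False ..
  qed
  then have "\<exists>x\<in>carrier_vec N. A *\<^sub>v x = vec N (\<lambda>i. if i = k then 1 else 0)"
    by (intro solve_mat[OF A]) auto
  then obtain x where x: "x \<in> carrier_vec N" "A *\<^sub>v x = vec N (\<lambda>i. if i = k then 1 else 0)"
    by blast
  define p where "p = (\<lambda>t. \<Sum>j<N. x$j * (fs!j) t)"
  have Lp: "L i p = (if i = k then 1 else 0)" if "i < N" for i
  proof -
    have "L i p = (A *\<^sub>v x) $ i" unfolding p_def Lsum Av[OF that x(1)] ..
    also have "\<dots> = (if i = k then 1 else 0)" using x(2) that by simp
    finally show ?thesis .
  qed
  have E: "p \<in> Espace \<mu>s" unfolding p_def by (rule Espace_sum) (use fs(2) in auto)
  have Z1: "\<forall>j<k. nderiv j p a = 0"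
  proof (intro allI impI)
    fix j assume j: "j < k"
    then have "j < N" using k N_def by simp
    from Lp[OF this] j show "nderiv j p a = 0" by (simp add: L_def)
  qed
  have Z2: "nderiv k p a = 1" using Lp[of k] k N_def by (simp add: L_def)
  have Z3: "\<forall>j<length \<mu>s - 1 - k. nderiv j p b = 0"
  proof (intro allI impI)
    fix j assume j: "j < length \<mu>s - 1 - k"
    then have "j + Suc k < N" using N_def by simp
    from Lp[OF this] show "nderiv j p b = 0" by (simp add: L_def)
  qed
  show ?thesis
  proof (rule bexI[of _ p])
    show "p \<in> Espace \<mu>s" by (rule E)
    show "(\<forall>j<k. nderiv j p a = 0) \<and> nderiv k p a = 1 \<and> (\<forall>j<length \<mu>s - 1 - k. nderiv j p b = 0)"
      using Z1 Z2 Z3 by (intro conjI)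
  qed
qed

lemma top_nonzero:
  assumes ect: "ECT \<mu>s {a,b}" and ab: "a \<noteq> b" and k: "k < length \<mu>s"
    and p: "p \<in> Espace \<mu>s" "nderiv k p a = 1" "\<forall>j<k. nderiv j p a = 0"
       "\<forall>j<length \<mu>s - 1 - k. nderiv j p b = 0"
  shows "nderiv (length \<mu>s - 1 - k) p b \<noteq> 0"
proof
  assume z: "nderiv (length \<mu>s - 1 - k) p b = 0"
  have "p = (\<lambda>x. 0)"
  proof (rule ECT_zero[OF ect ab p(1), of k "length \<mu>s - k"])
    show "\<forall>j<k. nderiv j p a = 0" by fact
    show "\<forall>j<length \<mu>s - k. nderiv j p b = 0"
    proof (intro allI impI)
      fix j assume "j < length \<mu>s - k"
      then have "j < length \<mu>s - 1 - k \<or> j = length \<mu>s - 1 - k" by linarith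
      then show "nderiv j p b = 0" using z p(4) by auto
    qed
    show "k + (length \<mu>s - k) > length \<mu>s - 1" using k by simp
  qed
  then show False using p(2) by (simp add: nderiv_zero)
qed

lemma bernstein_eq:
  assumes ect: "ECT \<mu>s {a,b}" and ab: "a \<noteq> b" and k: "k < length \<mu>s"
    and p: "p \<in> Espace \<mu>s" "\<forall>j<k. nderiv j p a = 0" "nderiv k p a = 1"
       "\<forall>j<length \<mu>s - 1 - k. nderiv j p b = 0"
  shows "bernstein \<mu>s a b k = p"
  unfolding bernstein_def
proof (rule the_equality)
  have nb: "nderiv (length \<mu>s - 1 - k) p b \<noteq> 0"
    by (rule top_nonzero[OF ect ab k p(1) p(3) p(2) p(4)])
  show "p \<in> Espace \<mu>s \<and> zero_of_order p a k \<and> zero_of_order p b (length \<mu>s - 1 - k) \<and> nderiv k p a = 1"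
    using p nb by (auto simp: zero_of_order_def)
  fix q assume q: "q \<in> Espace \<mu>s \<and> zero_of_order q a k \<and> zero_of_order q b (length \<mu>s - 1 - k) \<and> nderiv k q a = 1"
  have sp: "smooth p" "smooth q" using p q by (auto simp: Espace_def)
  have qp: "(\<lambda>x. q x - p x) = (\<lambda>x. 0)"
  proof (rule ECT_zero[OF ect ab Espace_diff, of q p "Suc k" "length \<mu>s - 1 - k"])
    show "q \<in> Espace \<mu>s" "p \<in> Espace \<mu>s" using p q by auto
    show "\<forall>j<Suc k. nderiv j (\<lambda>x. q x - p x) a = 0"
    proof (intro allI impI)
      fix j assume "j < Suc k"
      then have "j < k \<or> j = k" by auto
      moreover have "\<forall>j<k. nderiv j q a = 0" "nderiv k q a = 1" using q by (auto simp: zero_of_order_def)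
      ultimately show "nderiv j (\<lambda>x. q x - p x) a = 0"
        using p(2,3) unfolding nderiv_diff[OF sp(2) sp(1)] by auto
    qed
    have "\<forall>j<length \<mu>s - 1 - k. nderiv j q b = 0" using q by (auto simp: zero_of_order_def)
    then show "\<forall>j<length \<mu>s - 1 - k. nderiv j (\<lambda>x. q x - p x) b = 0"
      using p(4) unfolding nderiv_diff[OF sp(2) sp(1)] by auto
    show "Suc k + (length \<mu>s - 1 - k) > length \<mu>s - 1" using k by simp
  qed
  show "q = p"
  proof
    fix x from fun_cong[OF qp, of x] show "q x = p x" by simp
  qed
qed

lemma bernstein_props:
  assumes ect: "ECT \<mu>s {a,b}" and ab: "a \<noteq> b" and k: "k < length \<mu>s"
  defines "p \<equiv> bernstein \<mu>s a b k"
  shows "p \<in> Espace \<mu>s" "\<forall>j<k. nderiv j p a = 0" "nderiv k p a = 1"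
       "\<forall>j<length \<mu>s - 1 - k. nderiv j p b = 0" "nderiv (length \<mu>s - 1 - k) p b \<noteq> 0"
proof -
  obtain q where q: "q \<in> Espace \<mu>s" "\<forall>j<k. nderiv j q a = 0" "nderiv k q a = 1"
       "\<forall>j<length \<mu>s - 1 - k. nderiv j q b = 0"
    using hermite_exists[OF ect ab k] by blast
  have "p = q" unfolding p_def by (rule bernstein_eq[OF ect ab k q])
  with q show "p \<in> Espace \<mu>s" "\<forall>j<k. nderiv j p a = 0" "nderiv k p a = 1"
       "\<forall>j<length \<mu>s - 1 - k. nderiv j p b = 0" by auto
  show "nderiv (length \<mu>s - 1 - k) p b \<noteq> 0"
    using top_nonzero[OF ect ab k q(1) q(3) q(2) q(4)] \<open>p = q\<close> by simp
qed



lemma lim_between: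
  fixes g G :: "real \<Rightarrow> real"
  assumes H: "\<And>x. x \<noteq> b \<Longrightarrow> \<exists>s. \<bar>s - b\<bar> \<le> \<bar>x - b\<bar> \<and> g x = G s" and c: "isCont G b"
  shows "(g \<longlongrightarrow> G b) (at b)"
proof (rule tendstoI)
  fix e :: real assume e: "e > 0"
  from c e obtain d where d: "d > 0" "\<And>s. dist s b < d \<Longrightarrow> dist (G s) (G b) < e"
    unfolding continuous_at_eps_delta by blast
  show "eventually (\<lambda>x. dist (g x) (G b) < e) (at b)"
    unfolding eventually_at
  proof (intro exI conjI ballI impI)
    show "d > 0" by fact
    fix x assume "x \<in> UNIV" "x \<noteq> b \<and> dist x b < d"
    then obtain s where s: "\<bar>s-b\<bar> \<le> \<bar>x-b\<bar>" "g x = G s" using H by blast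
    have "dist s b < d" using s(1) \<open>x \<noteq> b \<and> dist x b < d\<close> by (simp add: dist_real_def)
    then show "dist (g x) (G b) < e" using d(2) s(2) by simp
  qed
qed

lemma taylor_lim:
  fixes F :: "nat \<Rightarrow> real \<Rightarrow> real"
  assumes D: "\<And>m x. DERIV (F m) x :> F (Suc m) x" and z: "\<forall>j<r. F j b = 0"
  shows "((\<lambda>x. F 0 x / (x-b)^r) \<longlongrightarrow> F r b / fact r) (at b)"
proof (rule lim_between[where G = "\<lambda>s. F r s / fact r"])
  show "isCont (\<lambda>s. F r s / fact r) b"
    using DERIV_isCont[OF D[of r b]] by (intro continuous_intros) auto
  fix x assume x: "x \<noteq> b"
  show "\<exists>s. \<bar>s-b\<bar> \<le> \<bar>x-b\<bar> \<and> F 0 x / (x-b)^r = F r s / fact r"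
  proof (cases "r = 0")
    case True then show ?thesis by (intro exI[of _ x]) simp
  next
    case False
    have "\<exists>t. 0 < \<bar>t\<bar> \<and> \<bar>t\<bar> < \<bar>x - b\<bar> \<and> (\<lambda>y. F 0 (y + b)) (x - b) =
      (\<Sum>m<r. ((\<lambda>m y. F m (y + b)) m 0 / fact m) * (x - b) ^ m) + ((\<lambda>m y. F m (y + b)) r t / fact r) * (x - b) ^ r"
    proof (rule Maclaurin_all_lt)
      show "(\<lambda>m y. F m (y + b)) 0 = (\<lambda>y. F 0 (y + b))" by simp
      show "0 < r" using False by simp
      show "x - b \<noteq> 0" using x by simp
      show "\<forall>m x. ((\<lambda>m y. F m (y + b)) m has_real_derivative (\<lambda>m y. F m (y + b)) (Suc m) x) (at x)"
        using D DERIV_shift by blast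
    qed
    then obtain t where t: "\<bar>t\<bar> < \<bar>x - b\<bar>" "F 0 x = (\<Sum>m<r. (F m b / fact m) * (x - b) ^ m) + (F r (t + b) / fact r) * (x - b) ^ r"
      by auto
    have "(\<Sum>m<r. (F m b / fact m) * (x - b) ^ m) = 0" using z by simp
    with t(2) have "F 0 x = (F r (t + b) / fact r) * (x - b) ^ r" by simp
    then have "F 0 x / (x-b)^r = F r (t + b) / fact r" using x by simp
    with t(1) show ?thesis by (intro exI[of _ "t + b"]) simp
  qed
qed

lemma complex_taylor_lim:
  assumes f: "smooth f" and z: "\<forall>j<r. nderiv j f b = 0"
  shows "((\<lambda>x. f x / of_real ((x-b)^r)) \<longlongrightarrow> nderiv r f b / of_real (fact r)) (at b)"
  unfolding tendsto_complex_iff Re_divide_of_real Im_divide_of_real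
proof
  have "((\<lambda>x. Re (nderiv 0 f x) / (x-b)^r) \<longlongrightarrow> Re (nderiv r f b) / fact r) (at b)"
  proof (rule taylor_lim[where F = "\<lambda>m x. Re (nderiv m f x)"])
    show "((\<lambda>x. Re (nderiv m f x)) has_real_derivative Re (nderiv (Suc m) f x)) (at x)" for m x
      unfolding has_real_derivative_iff_has_vector_derivative
      by (rule bounded_linear.has_vector_derivative[OF bounded_linear_Re smooth_hvd[OF f]])
    show "\<forall>j<r. Re (nderiv j f b) = 0" using z by simp
  qed
  then show "((\<lambda>x. Re (f x) / (x-b)^r) \<longlongrightarrow> Re (nderiv r f b) / fact r) (at b)" by simp
  have "((\<lambda>x. Im (nderiv 0 f x) / (x-b)^r) \<longlongrightarrow> Im (nderiv r f b) / fact r) (at b)"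
  proof (rule taylor_lim[where F = "\<lambda>m x. Im (nderiv m f x)"])
    show "((\<lambda>x. Im (nderiv m f x)) has_real_derivative Im (nderiv (Suc m) f x)) (at x)" for m x
      unfolding has_real_derivative_iff_has_vector_derivative
      by (rule bounded_linear.has_vector_derivative[OF bounded_linear_Im smooth_hvd[OF f]])
    show "\<forall>j<r. Im (nderiv j f b) = 0" using z by simp
  qed
  then show "((\<lambda>x. Im (f x) / (x-b)^r) \<longlongrightarrow> Im (nderiv r f b) / fact r) (at b)" by simp
qed

lemma divdiv: "(c::complex) \<noteq> 0 \<Longrightarrow> (u / c) / (v / c) = u / v"
  by (cases "v = 0") (simp_all add: field_simps)

theorem mainTheorem11:
  fixes l0 l1 :: complex and ls :: "complex list" and a b :: real
  assumes "l0 \<noteq> l1" and "a \<noteq> b"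
    and "ECT (l0 # l1 # ls) {a, b}"
    and "ECT (l0 # ls) {a, b}"
    and "ECT (l1 # ls) {a, b}"
    and "ECT ls {a, b}"
  shows "\<forall>k \<le> length ls.
     (\<exists>C :: complex. C \<noteq> 0 \<and>
        (\<lambda>x. bernstein (l0 # ls) a b k x - bernstein (l1 # ls) a b k x)
          = (\<lambda>x. C * bernstein (l0 # l1 # ls) a b (Suc k) x))
     \<and> (\<exists>L. ((\<lambda>x. bernstein (l0 # ls) a b k x / bernstein (l1 # ls) a b k x)
              \<longlongrightarrow> L) (at b) \<and> L \<noteq> 1)"
proof (intro allI impI)
  fix k assume k: "k \<le> length ls"
  note ab = assms(2)
  define n where "n = length ls"
  have k0: "k < length (l0 # ls)" and k1: "k < length (l1 # ls)" using k by simp_all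
  define p0 where "p0 = bernstein (l0 # ls) a b k"
  define p1 where "p1 = bernstein (l1 # ls) a b k"
  note P0 = bernstein_props[OF assms(4) ab k0, folded p0_def, simplified, folded n_def]
  note P1 = bernstein_props[OF assms(5) ab k1, folded p1_def, simplified, folded n_def]
  have sm0: "smooth p0" and sm1: "smooth p1" using P0(1) P1(1) by (auto simp: Espace_def)
  define d where "d = (\<lambda>x. p0 x - p1 x)"
  have dE: "d \<in> Espace (l0 # l1 # ls)"
    unfolding d_def by (rule Espace_diff[OF Espace_Cons2[OF P0(1)] Espace_Cons[OF P1(1)]])
  have smd: "smooth d" using dE by (auto simp: Espace_def)
  have nd: "nderiv j d = (\<lambda>x. nderiv j p0 x - nderiv j p1 x)" for j
    unfolding d_def by (rule nderiv_diff[OF sm0 sm1])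
  have da: "\<forall>j<Suc k. nderiv j d a = 0" using P0 P1 by (auto simp: nd less_Suc_eq)
  have db: "\<forall>j<n-k. nderiv j d b = 0" using P0(4) P1(4) by (simp add: nd)
  have d_nz: "d \<noteq> (\<lambda>x. 0)"
  proof
    assume d0: "d = (\<lambda>x. 0)"
    have eq: "p0 = p1"
    proof
      fix x show "p0 x = p1 x" using fun_cong[OF d0, of x] by (simp add: d_def)
    qed
    define g where "g = diffop ls p0"
    have g0: "lop l0 g = (\<lambda>x. 0)" using P0(1) by (simp add: Espace_def g_def diffop_Cons del: diffop.simps)
    have g1: "lop l1 g = (\<lambda>x. 0)" using P1(1) eq by (simp add: Espace_def g_def diffop_Cons del: diffop.simps)
    have g00: "g = (\<lambda>x. 0)"
    proof
      fix x
      have "lop l0 g x - lop l1 g x = (l1 - l0) * g x" by (simp add: lop_def algebra_simps)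
      then have "(l1 - l0) * g x = 0" using g0 g1 by simp
      then show "g x = 0" using assms(1) by simp
    qed
    then have pE: "p0 \<in> Espace ls" using sm0 by (simp add: Espace_def g_def)
    show False
    proof (cases "ls = []")
      case True
      then have "p0 = (\<lambda>x. 0)" using g00 by (simp add: g_def)
      then show False using P0(3) by (simp add: nderiv_zero)
    next
      case False
      have "p0 = (\<lambda>x. 0)"
        by (rule ECT_zero[OF assms(6) ab pE, of k "n - k"]) (use P0 False k in \<open>auto simp: n_def\<close>)
      then show False using P0(3) by (simp add: nderiv_zero)
    qed
  qed
  define C where "C = nderiv (Suc k) d a"
  have C0: "C \<noteq> 0"
  proof
    assume "C = 0"
    then have "\<forall>j<Suc (Suc k). nderiv j d a = 0" using da by (auto simp: C_def less_Suc_eq)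
    then have "d = (\<lambda>x. 0)" by (rule ECT_zero[OF assms(3) ab dE _ db]) (simp add: n_def k)
    with d_nz show False ..
  qed
  have dbn: "nderiv (n - k) d b \<noteq> 0"
  proof
    assume z: "nderiv (n - k) d b = 0"
    then have "\<forall>j<Suc (n-k). nderiv j d b = 0" using db by (auto simp: less_Suc_eq)
    then have "d = (\<lambda>x. 0)" by (rule ECT_zero[OF assms(3) ab dE da]) (simp add: n_def k)
    with d_nz show False ..
  qed
  define q where "q = (\<lambda>x. inverse C * d x)"
  have nq: "nderiv j q = (\<lambda>x. inverse C * nderiv j d x)" for j
    unfolding q_def by (rule nderiv_cmult[OF smd])
  have bq: "bernstein (l0 # l1 # ls) a b (Suc k) = q"
  proof (rule bernstein_eq[OF assms(3) ab])
    show "Suc k < length (l0 # l1 # ls)" using k by simp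
    show "q \<in> Espace (l0 # l1 # ls)" unfolding q_def by (rule Espace_cmult[OF dE])
    show "\<forall>j<Suc k. nderiv j q a = 0" using da by (simp add: nq)
    show "nderiv (Suc k) q a = 1"
    proof -
      have "nderiv (Suc k) q a = inverse C * nderiv (Suc k) d a" by (simp only: nq)
      also have "\<dots> = inverse C * C" by (simp only: C_def)
      also have "\<dots> = 1" using C0 by simp
      finally show ?thesis .
    qed
    show "\<forall>j<length (l0 # l1 # ls) - 1 - Suc k. nderiv j q b = 0" using db by (simp add: nq n_def)
  qed
  have part1: "\<exists>C :: complex. C \<noteq> 0 \<and>
        (\<lambda>x. bernstein (l0 # ls) a b k x - bernstein (l1 # ls) a b k x)
          = (\<lambda>x. C * bernstein (l0 # l1 # ls) a b (Suc k) x)"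
    using C0 by (intro exI[of _ C]) (auto simp: bq q_def d_def p0_def p1_def fun_eq_iff)
  define r where "r = n - k"
  have L0: "((\<lambda>x. p0 x / of_real ((x-b)^r)) \<longlongrightarrow> nderiv r p0 b / of_real (fact r)) (at b)"
    by (rule complex_taylor_lim[OF sm0]) (use P0(4) in \<open>simp add: r_def\<close>)
  have L1: "((\<lambda>x. p1 x / of_real ((x-b)^r)) \<longlongrightarrow> nderiv r p1 b / of_real (fact r)) (at b)"
    by (rule complex_taylor_lim[OF sm1]) (use P1(4) in \<open>simp add: r_def\<close>)
  have B1: "nderiv r p1 b \<noteq> 0" using P1(5) by (simp add: r_def)
  have "((\<lambda>x. (p0 x / of_real ((x-b)^r)) / (p1 x / of_real ((x-b)^r))) \<longlongrightarrow>
          (nderiv r p0 b / of_real (fact r)) / (nderiv r p1 b / of_real (fact r))) (at b)"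
    by (rule tendsto_divide[OF L0 L1]) (simp add: B1)
  moreover have "eventually (\<lambda>x. (p0 x / of_real ((x-b)^r)) / (p1 x / of_real ((x-b)^r)) = p0 x / p1 x) (at b)"
    unfolding eventually_at
  proof (intro exI[of _ 1] conjI ballI impI)
    fix x assume "x \<in> UNIV" "x \<noteq> b \<and> dist x b < 1"
    then have "complex_of_real ((x-b)^r) \<noteq> 0" by simp
    then show "(p0 x / of_real ((x-b)^r)) / (p1 x / of_real ((x-b)^r)) = p0 x / p1 x"
      by (rule divdiv)
  qed simp
  ultimately have lim0: "((\<lambda>x. p0 x / p1 x) \<longlongrightarrow>
          (nderiv r p0 b / of_real (fact r)) / (nderiv r p1 b / of_real (fact r))) (at b)"
    by (rule tendsto_cong[THEN iffD1, rotated])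
  have "(nderiv r p0 b / of_real (fact r)) / (nderiv r p1 b / of_real (fact r)) = nderiv r p0 b / nderiv r p1 b"
    by (rule divdiv) simp
  with lim0 have lim: "((\<lambda>x. p0 x / p1 x) \<longlongrightarrow> nderiv r p0 b / nderiv r p1 b) (at b)"
    by simp
  have ne: "nderiv r p0 b / nderiv r p1 b \<noteq> 1"
  proof
    assume "nderiv r p0 b / nderiv r p1 b = 1"
    then have "nderiv r p0 b = nderiv r p1 b" using B1 by (simp add: field_simps)
    then have "nderiv r d b = 0" by (simp add: nd)
    with dbn show False by (simp add: r_def)
  qed
  have part2: "\<exists>L. ((\<lambda>x. p0 x / p1 x) \<longlongrightarrow> L) (at b) \<and> L \<noteq> 1"
    by (rule exI[where x = "nderiv r p0 b / nderiv r p1 b"]) (rule conjI[OF lim ne])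
  show "(\<exists>C :: complex. C \<noteq> 0 \<and>
        (\<lambda>x. bernstein (l0 # ls) a b k x - bernstein (l1 # ls) a b k x)
          = (\<lambda>x. C * bernstein (l0 # l1 # ls) a b (Suc k) x))
     \<and> (\<exists>L. ((\<lambda>x. bernstein (l0 # ls) a b k x / bernstein (l1 # ls) a b k x)
              \<longlongrightarrow> L) (at b) \<and> L \<noteq> 1)"
    using part1 part2 unfolding p0_def p1_def by (rule conjI)
qed


end
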